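(* Let $H$ be a real Hilbert space, $A:H\to2^H$ maximal monotone with $\mathrm{zer}A\ne\emptyset$, $(\gamma_n)$ a sequence in $(0,\infty)$ with $\sum_n\gamma_n^2=\infty$ and rate of divergence $\theta$, $x_0\in H$, $x_{n+1}=J_{\gamma_nA}x_n$, $u_n=(x_n-x_{n+1})/\gamma_n$, and $b>0$ with $b\ge\|x_0-p\|$ for some $p\in\mathrm{zer}A$. Then: (i) for every $k,L\in\mathbb{N}$ there exists $N$ with $L\le N\le\Delta(k,L,b):=\lceil b^2(k+1)^2\rceil+L-1$ and $\|x_N-x_{N+1}\|\le\frac1{k+1}$; (ii) $u_n\to0$ with rate of convergence $\beta(k,\theta,b):=\theta(\lceil b^2(k+1)^2\rceil)$, i.e. $\|u_n\|\le\frac1{k+1}$ for all $k$ and all $n\ge\beta(k,\theta,b)$.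
   Context: $J_{\gamma A}:=(Id+\gamma A)^{-1}$ is the resolvent. A rate of divergence for $\sum\gamma_n^2$ is $\theta:\mathbb{N}\to\mathbb{N}$ with $\sum_{i=0}^{\theta(n)}\gamma_i^2\ge n$ for all $n$. *)

theory Defs
  imports "HOL-Analysis.Analysis"
begin

text \<open>Set-valued operators A : H \<rightarrow> 2^H are represented as functions 'a \<Rightarrow> 'a set
  (A x is the image set of x; the graph is {(x,u). u \<in> A x}).\<close>

definition monotone_op :: "('a::real_inner \<Rightarrow> 'a set) \<Rightarrow> bool" where
  "monotone_op A \<longleftrightarrow> (\<forall>x y u v. u \<in> A x \<longrightarrow> v \<in> A y \<longrightarrow> inner (x - y) (u - v) \<ge> 0)"

definition maximal_monotone :: "('a::real_inner \<Rightarrow> 'a set) \<Rightarrow> bool" where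
  "maximal_monotone A \<longleftrightarrow> monotone_op A \<and>
     (\<forall>B. monotone_op B \<longrightarrow> (\<forall>x. A x \<subseteq> B x) \<longrightarrow> B = A)"

definition zer :: "('a::real_vector \<Rightarrow> 'a set) \<Rightarrow> 'a set" where
  "zer A = {x. 0 \<in> A x}"

text \<open>Resolvent J_{\<gamma>A} = (Id + \<gamma>A)^{-1}, as a set-valued map:
  y \<in> J x  iff  x \<in> y + \<gamma> A y.\<close>
definition resolvent :: "real \<Rightarrow> ('a::real_vector \<Rightarrow> 'a set) \<Rightarrow> 'a \<Rightarrow> 'a set" where
  "resolvent \<gamma> A x = {y. \<exists>v \<in> A y. x = y + \<gamma> *\<^sub>R v}"

definition rate_of_divergence :: "(nat \<Rightarrow> real) \<Rightarrow> (nat \<Rightarrow> nat) \<Rightarrow> bool" where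
  "rate_of_divergence \<gamma> \<theta> \<longleftrightarrow> (\<forall>n. (\<Sum>i=0..\<theta> n. (\<gamma> i)\<^sup>2) \<ge> real n)"

end

theory Submission
  imports Defs
begin

theorem lemma8p3:
  fixes A :: "'a::{real_inner, complete_space} \<Rightarrow> 'a set"
    and \<gamma> :: "nat \<Rightarrow> real" and \<theta> :: "nat \<Rightarrow> nat"
    and x u :: "nat \<Rightarrow> 'a" and b :: real and p :: 'a
  assumes mm: "maximal_monotone A"
    and "zer A \<noteq> {}"
    and gpos: "\<And>n. \<gamma> n > 0"
    and "\<not> summable (\<lambda>n. (\<gamma> n)\<^sup>2)"
    and rate: "rate_of_divergence \<gamma> \<theta>"
    and res: "\<And>n. x (Suc n) \<in> resolvent (\<gamma> n) A (x n)"
    and udef: "\<And>n. u n = inverse (\<gamma> n) *\<^sub>R (x n - x (Suc n))"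
    and bpos: "b > 0"
    and pz: "p \<in> zer A"
    and bnd: "b \<ge> norm (x 0 - p)"
  shows "(\<forall>k L :: nat. \<exists>N. L \<le> N \<and> N \<le> nat \<lceil>b\<^sup>2 * (real k + 1)\<^sup>2\<rceil> + L - 1 \<and>
            norm (x N - x (Suc N)) \<le> 1 / (real k + 1))
       \<and> (\<forall>k n :: nat. n \<ge> \<theta> (nat \<lceil>b\<^sup>2 * (real k + 1)\<^sup>2\<rceil>) \<longrightarrow> norm (u n) \<le> 1 / (real k + 1))"
proof -
  have mon: "\<And>x y u v. u \<in> A x \<Longrightarrow> v \<in> A y \<Longrightarrow> inner (x - y) (u - v) \<ge> 0"
    using mm unfolding maximal_monotone_def monotone_op_def by blast
  have p0: "0 \<in> A p" using pz unfolding zer_def by simp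
  have step: "u n \<in> A (x (Suc n)) \<and> x n - x (Suc n) = \<gamma> n *\<^sub>R u n" for n
  proof -
    obtain v where v: "v \<in> A (x (Suc n))" "x n = x (Suc n) + \<gamma> n *\<^sub>R v"
      using res[of n] unfolding resolvent_def by blast
    have "x n - x (Suc n) = \<gamma> n *\<^sub>R v" using v(2) by simp
    hence "u n = v" using udef[of n] gpos[of n] by simp
    thus ?thesis using v \<open>x n - x (Suc n) = \<gamma> n *\<^sub>R v\<close> by simp
  qed
  define d where "d i = norm (x i - x (Suc i))" for i
  have dg: "(d i)\<^sup>2 = (\<gamma> i)\<^sup>2 * (norm (u i))\<^sup>2" for i
    using step[of i] gpos[of i] by (simp add: d_def power_mult_distrib)
  have fej: "(norm (x (Suc n) - p))\<^sup>2 + (d n)\<^sup>2 \<le> (norm (x n - p))\<^sup>2" for n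
  proof -
    define a where "a = x (Suc n) - p"
    define c where "c = x n - x (Suc n)"
    have e: "x n - p = a + c" by (simp add: a_def c_def)
    have "inner a c = \<gamma> n * inner (x (Suc n) - p) (u n - 0)"
      using step[of n] by (simp add: a_def c_def)
    moreover have "inner (x (Suc n) - p) (u n - 0) \<ge> 0" using mon step[of n] p0 by blast
    ultimately have ac: "inner a c \<ge> 0" using gpos[of n] by simp
    have "(norm (a + c))\<^sup>2 = (norm a)\<^sup>2 + (norm c)\<^sup>2 + 2 * inner a c"
      by (simp add: power2_norm_eq_inner inner_add_left inner_add_right inner_commute)
    thus ?thesis using ac e by (simp add: a_def[symmetric] c_def[symmetric] d_def)
  qed
  have sumb: "(\<Sum>i<n. (d i)\<^sup>2) + (norm (x n - p))\<^sup>2 \<le> (norm (x 0 - p))\<^sup>2" for n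
  proof (induction n)
    case (Suc n) then show ?case using fej[of n] by simp
  qed simp
  have b2: "(norm (x 0 - p))\<^sup>2 \<le> b\<^sup>2" using bnd by (simp add: power_mono)
  have sumb2: "(\<Sum>i<n. (d i)\<^sup>2) \<le> b\<^sup>2" for n
    using sumb[of n] b2 by (smt (verit) zero_le_power2)
  have umon: "norm (u (Suc n)) \<le> norm (u n)" for n
  proof -
    have "inner (x (Suc n) - x (Suc (Suc n))) (u n - u (Suc n)) \<ge> 0"
      using mon step[of n] step[of "Suc n"] by blast
    hence "\<gamma> (Suc n) * inner (u (Suc n)) (u n - u (Suc n)) \<ge> 0"
      using step[of "Suc n"] by simp
    hence "inner (u (Suc n)) (u n - u (Suc n)) \<ge> 0"
      using gpos[of "Suc n"] by (simp add: zero_le_mult_iff)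
    hence "(norm (u (Suc n)))\<^sup>2 \<le> inner (u (Suc n)) (u n)"
      by (simp add: inner_diff_right power2_norm_eq_inner)
    also have "\<dots> \<le> norm (u (Suc n)) * norm (u n)" by (rule norm_cauchy_schwarz)
    finally have "norm (u (Suc n)) * norm (u (Suc n)) \<le> norm (u (Suc n)) * norm (u n)"
      by (simp add: power2_eq_square)
    thus ?thesis
      by (metis mult_le_cancel_left norm_ge_zero order.strict_iff_order)
  qed
  have uanti: "i \<le> n \<Longrightarrow> norm (u n) \<le> norm (u i)" for i n
  proof (induction n rule: dec_induct)
    case (step m) then show ?case using umon[of m] by linarith
  qed simp
  show ?thesis
  proof (intro conjI allI impI)
    fix k L :: nat
    define M where "M = nat \<lceil>b\<^sup>2 * (real k + 1)\<^sup>2\<rceil>"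
    have Mr: "real M \<ge> b\<^sup>2 * (real k + 1)\<^sup>2" unfolding M_def by linarith
    have "b\<^sup>2 * (real k + 1)\<^sup>2 > 0" using bpos by simp
    hence M1: "M \<ge> 1" unfolding M_def by linarith
    show "\<exists>N. L \<le> N \<and> N \<le> nat \<lceil>b\<^sup>2 * (real k + 1)\<^sup>2\<rceil> + L - 1 \<and>
            norm (x N - x (Suc N)) \<le> 1 / (real k + 1)"
    proof (rule ccontr)
      assume H: "\<not> ?thesis"
      have big: "d N > 1 / (real k + 1)" if "N \<in> {L..<L+M}" for N
      proof -
        have "L \<le> N" "N \<le> M + L - 1" using that M1 by auto
        hence "\<not> norm (x N - x (Suc N)) \<le> 1 / (real k + 1)" using H unfolding M_def[symmetric] by blast
        thus ?thesis unfolding d_def by simp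
      qed
      have "(\<Sum>N\<in>{L..<L+M}. (1 / (real k + 1))\<^sup>2) < (\<Sum>N\<in>{L..<L+M}. (d N)\<^sup>2)"
        apply (rule sum_strict_mono)
        using M1 big by (auto intro!: power_strict_mono)
      also have "\<dots> \<le> (\<Sum>N<L+M. (d N)\<^sup>2)"
        by (rule sum_mono2) auto
      also have "\<dots> \<le> b\<^sup>2" by (rule sumb2)
      finally have "real M * (1 / (real k + 1))\<^sup>2 < b\<^sup>2" by simp
      moreover have "real M * (1 / (real k + 1))\<^sup>2 \<ge> b\<^sup>2"
        using Mr by (simp add: power_divide field_simps)
      ultimately show False by simp
    qed
  next
    fix k n :: nat
    define M where "M = nat \<lceil>b\<^sup>2 * (real k + 1)\<^sup>2\<rceil>"
    have Mr: "real M \<ge> b\<^sup>2 * (real k + 1)\<^sup>2" unfolding M_def by linarith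
    assume "\<theta> (nat \<lceil>b\<^sup>2 * (real k + 1)\<^sup>2\<rceil>) \<le> n"
    hence nn: "\<theta> M \<le> n" unfolding M_def .
    have "b\<^sup>2 * (real k + 1)\<^sup>2 * (norm (u n))\<^sup>2 \<le> (\<Sum>i=0..\<theta> M. (\<gamma> i)\<^sup>2) * (norm (u n))\<^sup>2"
      using Mr rate unfolding rate_of_divergence_def
      by (meson mult_right_mono order_trans zero_le_power2)
    also have "\<dots> = (\<Sum>i=0..\<theta> M. (\<gamma> i)\<^sup>2 * (norm (u n))\<^sup>2)" by (simp add: sum_distrib_right)
    also have "\<dots> \<le> (\<Sum>i=0..\<theta> M. (\<gamma> i)\<^sup>2 * (norm (u i))\<^sup>2)"
      apply (rule sum_mono) apply (rule mult_left_mono)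
      using uanti nn by (auto intro!: power_mono)
    also have "\<dots> = (\<Sum>i<Suc (\<theta> M). (d i)\<^sup>2)"
      using dg by (simp add: atLeast0AtMost lessThan_Suc_atMost)
    also have "\<dots> \<le> b\<^sup>2" by (rule sumb2)
    finally have "b\<^sup>2 * ((real k + 1)\<^sup>2 * (norm (u n))\<^sup>2) \<le> b\<^sup>2 * 1" by (simp add: mult.assoc)
    hence "(real k + 1)\<^sup>2 * (norm (u n))\<^sup>2 \<le> 1" using bpos by simp
    hence "((real k + 1) * norm (u n))\<^sup>2 \<le> 1\<^sup>2" by (simp add: power_mult_distrib)
    hence "(real k + 1) * norm (u n) \<le> 1"
      by (rule power2_le_imp_le) simp
    thus "norm (u n) \<le> 1 / (real k + 1)" by (simp add: field_simps)
  qed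
qed

end
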